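(* Let $A\in\mathbb{R}^{n\times n}$ with $\rho(|A|)<1$ (in particular $\rho(A)<1$), let $\mathcal{X}=(I-|A|)^{-1}$ with entries $\mathcal{X}_{pq}$, let $i,j\in\{1,\dots,n\}$, and let $w\in\mathbb{R}$ satisfy $-\frac{1}{\mathcal{X}_{ij}}<w<\frac{1}{\mathcal{X}_{ij}}$ (if $\mathcal{X}_{ij}=0$ this condition imposes no restriction on $w$). Then the modified matrix $A+we_je_i^{\top}$ (adding weight $w$ to the edge $i\to j$) satisfies $\rho(A+we_je_i^{\top})<1$.
   Context: $|A|$ is the entrywise absolute value; $\rho$ is the spectral radius; $e_k$ is the $k$-th canonical unit vector. Note $\mathcal{X}\ge0$ entrywise. *)

theory Defs
  imports "Jordan_Normal_Form.Spectral_Radius"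
begin

definition abs_mat :: "real mat \<Rightarrow> real mat" where
  "abs_mat A = map_mat abs A"

definition spectral_radius_real :: "real mat \<Rightarrow> real" where
  "spectral_radius_real A = spectral_radius (map_mat complex_of_real A)"

text \<open>Rank-one matrix e_j e_i^T of size n (0-based indices).\<close>
definition outer_unit :: "nat \<Rightarrow> nat \<Rightarrow> nat \<Rightarrow> real mat" where
  "outer_unit n j i = mat n n (\<lambda>(p,q). (unit_vec n j $ p) * (unit_vec n i $ q))"

end

theory Submission
  imports Defs
begin

lemma smult_pow_mat:
  fixes N :: "real mat"
  assumes N: "N \<in> carrier_mat n n"
  shows "(c \<cdot>\<^sub>m N) ^\<^sub>m k = (c ^ k) \<cdot>\<^sub>m (N ^\<^sub>m k)"
proof (induct k)
  case 0
  then show ?case using N by (auto intro!: eq_matI)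
next
  case (Suc k)
  have "(c \<cdot>\<^sub>m N) ^\<^sub>m Suc k = ((c ^ k) \<cdot>\<^sub>m (N ^\<^sub>m k)) * (c \<cdot>\<^sub>m N)" using Suc by simp
  also have "\<dots> = (c ^ k) \<cdot>\<^sub>m ((N ^\<^sub>m k) * (c \<cdot>\<^sub>m N))"
    by (rule mult_smult_assoc_mat[OF pow_carrier_mat[OF N]], insert N, auto)
  also have "(N ^\<^sub>m k) * (c \<cdot>\<^sub>m N) = c \<cdot>\<^sub>m (N ^\<^sub>m k * N)"
    by (rule mult_smult_distrib[OF pow_carrier_mat[OF N] N])
  finally show ?case using N by (auto intro!: eq_matI)
qed

lemma sr_scale:
  fixes N :: "real mat"
  assumes N: "N \<in> carrier_mat n n" and n: "n > 0" and c: "c > 0"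
  shows "spectral_radius_real (c \<cdot>\<^sub>m N) \<le> c * spectral_radius_real N"
proof -
  let ?M = "map_mat complex_of_real (c \<cdot>\<^sub>m N)"
  let ?NC = "map_mat complex_of_real N"
  have M: "?M \<in> carrier_mat n n" using N by auto
  have NC: "?NC \<in> carrier_mat n n" using N by auto
  from spectral_radius_mem_max(1)[OF M n] obtain ev where
    ev: "ev \<in> spectrum ?M" and eq: "spectral_radius ?M = norm ev" by auto
  from ev obtain v where v: "eigenvector ?M v ev" unfolding spectrum_def eigenvalue_def by auto
  hence vc: "v \<in> carrier_vec n" and v0: "v \<noteq> 0\<^sub>v n" and Mv: "?M *\<^sub>v v = ev \<cdot>\<^sub>v v"
    unfolding eigenvector_def using M by auto
  have "?NC *\<^sub>v v = (ev / complex_of_real c) \<cdot>\<^sub>v v"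
  proof (rule eq_vecI)
    fix p assume p: "p < dim_vec ((ev / complex_of_real c) \<cdot>\<^sub>v v)"
    hence p': "p < n" using vc by auto
    have "(?M *\<^sub>v v) $ p = (ev \<cdot>\<^sub>v v) $ p" using Mv by simp
    hence "complex_of_real c * (?NC *\<^sub>v v) $ p = ev * v $ p"
      using p' N vc by (simp add: scalar_prod_def sum_distrib_left mult.assoc)
    then show "(?NC *\<^sub>v v) $ p = ((ev / complex_of_real c) \<cdot>\<^sub>v v) $ p"
      using p' vc c by (simp add: field_simps)
  qed (insert vc N, auto)
  hence "eigenvector ?NC v (ev / complex_of_real c)" unfolding eigenvector_def using vc v0 N by auto
  hence "norm (ev / complex_of_real c) \<in> norm ` spectrum ?NC" unfolding spectrum_def eigenvalue_def by auto
  from spectral_radius_mem_max(2)[OF NC n this]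
  have "norm ev / c \<le> spectral_radius ?NC" using c by (simp add: norm_divide)
  thus ?thesis unfolding spectral_radius_real_def eq using c by (simp add: field_simps)
qed

lemma pow_decay:
  fixes N :: "real mat"
  assumes N: "N \<in> carrier_mat n n" and n: "n > 0" and r: "spectral_radius_real N < 1"
  shows "\<exists>c C. c > 1 \<and> (\<forall>k p q. p < n \<longrightarrow> q < n \<longrightarrow> c ^ k * \<bar>(N ^\<^sub>m k) $$ (p,q)\<bar> \<le> C)"
proof -
  let ?r = "spectral_radius_real N"
  have NC: "map_mat complex_of_real N \<in> carrier_mat n n" using N by auto
  have "?r \<in> norm ` spectrum (map_mat complex_of_real N)"
    using spectral_radius_mem_max(1)[OF NC n] unfolding spectral_radius_real_def .
  hence r0: "?r \<ge> 0" by auto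
  define c where "c = 2 / (1 + ?r)"
  have c1: "c > 1" unfolding c_def using r r0 by (simp add: field_simps)
  have "c * ?r < 1" unfolding c_def using r r0 by (simp add: field_simps)
  with sr_scale[OF N n, of c] c1 have sr: "spectral_radius_real (c \<cdot>\<^sub>m N) < 1" by auto
  let ?M = "map_mat complex_of_real (c \<cdot>\<^sub>m N)"
  have M: "?M \<in> carrier_mat n n" using N by auto
  from spectral_radius_jnf_norm_bound_less_1_upper_triangular[OF M sr[unfolded spectral_radius_real_def]]
  obtain C where C: "\<And>k. norm_bound (?M ^\<^sub>m k) C" by auto
  have "c ^ k * \<bar>(N ^\<^sub>m k) $$ (p,q)\<bar> \<le> C" if p: "p < n" and q: "q < n" for k p q
  proof -
    have cN: "c \<cdot>\<^sub>m N \<in> carrier_mat n n" using N by auto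
    have eq: "?M ^\<^sub>m k = map_mat complex_of_real ((c ^ k) \<cdot>\<^sub>m (N ^\<^sub>m k))"
      using of_real_hom.mat_hom_pow[OF cN, of k] smult_pow_mat[OF N, of c k] by metis
    from C[of k] have "norm ((?M ^\<^sub>m k) $$ (p,q)) \<le> C" unfolding norm_bound_def
      using p q M pow_carrier_mat[OF M, of k] by (metis carrier_matD)
    hence "norm (complex_of_real (c ^ k * (N ^\<^sub>m k) $$ (p,q))) \<le> C"
      unfolding eq using p q N by simp
    thus ?thesis using c1 by (simp only: norm_of_real abs_mult) simp
  qed
  thus ?thesis using c1 by blast
qed

lemma pow_nonneg:
  fixes N :: "real mat"
  assumes N: "N \<in> carrier_mat n n" and nn: "\<And>p q. p < n \<Longrightarrow> q < n \<Longrightarrow> N $$ (p,q) \<ge> 0"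
  shows "p < n \<Longrightarrow> q < n \<Longrightarrow> (N ^\<^sub>m k) $$ (p,q) \<ge> 0"
proof (induct k arbitrary: p q)
  case 0
  then show ?case using N by simp
next
  case (Suc k)
  have "(N ^\<^sub>m Suc k) $$ (p,q) = (\<Sum>s<n. (N ^\<^sub>m k) $$ (p,s) * N $$ (s,q))"
    using Suc.prems N by (simp add: scalar_prod_def atLeast0LessThan)
  also have "\<dots> \<ge> 0" using Suc nn by (intro sum_nonneg mult_nonneg_nonneg) auto
  finally show ?case .
qed

lemma sub_eig_zero:
  fixes N :: "real mat" and z :: "nat \<Rightarrow> real"
  assumes N: "N \<in> carrier_mat n n" and nn: "\<And>p q. p < n \<Longrightarrow> q < n \<Longrightarrow> N $$ (p,q) \<ge> 0"
    and r: "spectral_radius_real N < 1"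
    and z0: "\<And>p. p < n \<Longrightarrow> z p \<ge> 0"
    and zN: "\<And>p. p < n \<Longrightarrow> z p \<le> (\<Sum>r<n. N $$ (p,r) * z r)"
    and p: "p < n"
  shows "z p = 0"
proof (rule ccontr)
  assume "z p \<noteq> 0"
  with z0[OF p] have zp: "z p > 0" by auto
  have n: "n > 0" using p by auto
  have ind: "\<forall>p<n. z p \<le> (\<Sum>r<n. (N ^\<^sub>m k) $$ (p,r) * z r)" for k
  proof (induct k)
    case 0
    show ?case
    proof (intro allI impI)
      fix p assume p: "p < n"
      have "(\<Sum>r<n. (N ^\<^sub>m 0) $$ (p,r) * z r) = (\<Sum>r<n. (if r = p then z r else 0))"
        using p N by (intro sum.cong) auto
      also have "\<dots> = z p" using p by (simp add: sum.delta)
      finally show "z p \<le> (\<Sum>r<n. (N ^\<^sub>m 0) $$ (p,r) * z r)" by simp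
    qed
  next
    case (Suc k)
    show ?case
    proof (intro allI impI)
      fix p assume p: "p < n"
      have "(\<Sum>r<n. (N ^\<^sub>m Suc k) $$ (p,r) * z r)
          = (\<Sum>r<n. (\<Sum>s<n. (N ^\<^sub>m k) $$ (p,s) * N $$ (s,r)) * z r)"
        using p N by (intro sum.cong) (auto simp: scalar_prod_def atLeast0LessThan)
      also have "\<dots> = (\<Sum>r<n. \<Sum>s<n. (N ^\<^sub>m k) $$ (p,s) * N $$ (s,r) * z r)"
        by (simp add: sum_distrib_right)
      also have "\<dots> = (\<Sum>s<n. \<Sum>r<n. (N ^\<^sub>m k) $$ (p,s) * N $$ (s,r) * z r)"
        by (rule sum.swap)
      also have "\<dots> = (\<Sum>s<n. (N ^\<^sub>m k) $$ (p,s) * (\<Sum>r<n. N $$ (s,r) * z r))"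
        by (simp add: sum_distrib_left mult.assoc)
      also have "\<dots> \<ge> (\<Sum>s<n. (N ^\<^sub>m k) $$ (p,s) * z s)"
        using zN pow_nonneg[OF N nn] p by (intro sum_mono mult_left_mono) auto
      finally show "z p \<le> (\<Sum>r<n. (N ^\<^sub>m Suc k) $$ (p,r) * z r)" using Suc p by auto
    qed
  qed
  from pow_decay[OF N n r] obtain c C where c: "c > 1"
    and C: "\<And>k p q. p < n \<Longrightarrow> q < n \<Longrightarrow> c ^ k * \<bar>(N ^\<^sub>m k) $$ (p,q)\<bar> \<le> C" by blast
  define S where "S = (\<Sum>r<n. z r)"
  from real_arch_pow[OF c, of "C * S / z p"] obtain k where k: "C * S / z p < c ^ k" by auto
  have ck: "c ^ k > 0" using c by auto
  have "c ^ k * z p \<le> c ^ k * (\<Sum>r<n. (N ^\<^sub>m k) $$ (p,r) * z r)"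
    using ind[of k] p ck by auto
  also have "\<dots> = (\<Sum>r<n. (c ^ k * (N ^\<^sub>m k) $$ (p,r)) * z r)"
    by (simp add: sum_distrib_left mult.assoc)
  also have "\<dots> \<le> (\<Sum>r<n. C * z r)"
  proof (intro sum_mono mult_right_mono)
    fix r assume "r \<in> {..<n}"
    hence r: "r < n" by auto
    show "c ^ k * (N ^\<^sub>m k) $$ (p, r) \<le> C"
      using C[OF p r, of k] ck by (smt (verit) abs_ge_self mult_left_mono)
    show "0 \<le> z r" using z0 r by auto
  qed
  also have "\<dots> = C * S" unfolding S_def by (simp add: sum_distrib_left)
  finally have "c ^ k * z p \<le> C * S" .
  moreover have "C * S < c ^ k * z p" using k zp by (simp add: field_simps)
  ultimately show False by auto
qed

theorem theorem5p4:
  fixes A X :: "real mat" and n i j :: nat and w :: real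
  assumes A: "A \<in> carrier_mat n n"
    and rho: "spectral_radius_real (abs_mat A) < 1"
    and X: "X \<in> carrier_mat n n"
    and Xinv1: "(1\<^sub>m n - abs_mat A) * X = 1\<^sub>m n"
    and Xinv2: "X * (1\<^sub>m n - abs_mat A) = 1\<^sub>m n"
    and i: "i < n" and j: "j < n"
    and w: "X $$ (i,j) = 0 \<or> (- 1 / X $$ (i,j) < w \<and> w < 1 / X $$ (i,j))"
  shows "spectral_radius_real (A + w \<cdot>\<^sub>m outer_unit n j i) < 1"
proof -
  define N where "N = abs_mat A"
  have N: "N \<in> carrier_mat n n" using A unfolding N_def abs_mat_def by auto
  have Ne: "\<And>p q. p < n \<Longrightarrow> q < n \<Longrightarrow> N $$ (p,q) = \<bar>A $$ (p,q)\<bar>"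
    using A unfolding N_def abs_mat_def by auto
  have Nnn: "\<And>p q. p < n \<Longrightarrow> q < n \<Longrightarrow> N $$ (p,q) \<ge> 0" using Ne by auto
  have rN: "spectral_radius_real N < 1" using rho unfolding N_def .
  have n: "n > 0" using i by auto
  have X1: "X $$ (p,q) - (\<Sum>r<n. N $$ (p,r) * X $$ (r,q)) = (if p = q then 1 else 0)"
    if p: "p < n" and q: "q < n" for p q
  proof -
    have "((1\<^sub>m n - N) * X) $$ (p,q) = (if p = q then 1 else 0)"
      using Xinv1 p q unfolding N_def by simp
    moreover have "((1\<^sub>m n - N) * X) $$ (p,q) = (\<Sum>r<n. ((if p = r then 1 else 0) - N $$ (p,r)) * X $$ (r,q))"
      using p q N X by (simp add: scalar_prod_def atLeast0LessThan)
    moreover have "\<dots> = (\<Sum>r<n. (if r = p then X $$ (r,q) else 0)) - (\<Sum>r<n. N $$ (p,r) * X $$ (r,q))"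
    proof -
      have "(\<Sum>r<n. ((if p = r then 1 else 0) - N $$ (p,r)) * X $$ (r,q))
          = (\<Sum>r<n. (if r = p then X $$ (r,q) else 0) - N $$ (p,r) * X $$ (r,q))"
        by (intro sum.cong refl) (auto simp: algebra_simps)
      thus ?thesis by (simp only: sum_subtractf)
    qed
    moreover have "(\<Sum>r<n. (if r = p then X $$ (r,q) else 0)) = X $$ (p,q)"
      using p by (simp add: sum.delta)
    ultimately show ?thesis by simp
  qed
  have X2: "(\<Sum>r<n. X $$ (p,r) * ((if r = s then 1 else 0) - N $$ (r,s))) = (if p = s then 1 else 0)"
    if p: "p < n" and s: "s < n" for p s
  proof -
    have "(X * (1\<^sub>m n - N)) $$ (p,s) = (if p = s then 1 else 0)"
      using Xinv2 p s unfolding N_def by simp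
    moreover have "(X * (1\<^sub>m n - N)) $$ (p,s) = (\<Sum>r<n. X $$ (p,r) * ((if r = s then 1 else 0) - N $$ (r,s)))"
      using p s N X by (simp add: scalar_prod_def atLeast0LessThan)
    ultimately show ?thesis by simp
  qed
  have Xnn: "X $$ (p,q) \<ge> 0" if p: "p < n" and q: "q < n" for p q
  proof -
    define z where "z r = max 0 (- X $$ (r,q))" for r
    have "z r = 0" if r: "r < n" for r
    proof (rule sub_eig_zero[OF N Nnn rN _ _ r])
      fix p assume p: "p < n"
      show "0 \<le> z p" unfolding z_def by auto
      have "(\<Sum>r<n. N $$ (p,r) * (- X $$ (r,q))) \<le> (\<Sum>r<n. N $$ (p,r) * z r)"
        using Nnn p by (intro sum_mono mult_left_mono) (auto simp: z_def)
      moreover have "- X $$ (p,q) \<le> (\<Sum>r<n. N $$ (p,r) * (- X $$ (r,q)))"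
        using X1[OF p q] by (simp add: sum_negf split: if_splits)
      moreover have "0 \<le> (\<Sum>r<n. N $$ (p,r) * z r)"
        using Nnn p by (intro sum_nonneg mult_nonneg_nonneg) (auto simp: z_def)
      ultimately show "z p \<le> (\<Sum>r<n. N $$ (p,r) * z r)" unfolding z_def by auto
    qed
    from this[OF p] show ?thesis unfolding z_def by auto
  qed
  define B where "B = A + w \<cdot>\<^sub>m outer_unit n j i"
  have B: "B \<in> carrier_mat n n" using A unfolding B_def outer_unit_def by auto
  have Be: "B $$ (p,q) = A $$ (p,q) + (if p = j \<and> q = i then w else 0)" if "p < n" "q < n" for p q
    using that A i j unfolding B_def outer_unit_def by auto
  have Babs: "\<bar>B $$ (p,q)\<bar> \<le> N $$ (p,q) + (if p = j \<and> q = i then \<bar>w\<bar> else 0)" if "p < n" "q < n" for p q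
    using Be[OF that] Ne[OF that] by auto
  let ?BC = "map_mat complex_of_real B"
  have BC: "?BC \<in> carrier_mat n n" using B by auto
  show ?thesis unfolding B_def[symmetric]
  proof (rule ccontr)
    assume "\<not> spectral_radius_real B < 1"
    hence ge: "spectral_radius ?BC \<ge> 1" unfolding spectral_radius_real_def by auto
    from spectral_radius_mem_max(1)[OF BC n] obtain ev where
      ev: "ev \<in> spectrum ?BC" and eq: "spectral_radius ?BC = norm ev" by auto
    from ev obtain v where v: "eigenvector ?BC v ev" unfolding spectrum_def eigenvalue_def by auto
    hence vc: "v \<in> carrier_vec n" and v0: "v \<noteq> 0\<^sub>v n" and Bv: "?BC *\<^sub>v v = ev \<cdot>\<^sub>v v"
      unfolding eigenvector_def using BC by auto
    have ev1: "norm ev \<ge> 1" using ge eq by auto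
    define u where "u p = cmod (v $ p)" for p
    have u0: "u p \<ge> 0" for p unfolding u_def by auto
    have ub: "u p \<le> (\<Sum>r<n. N $$ (p,r) * u r) + (if p = j then \<bar>w\<bar> * u i else 0)"
      if p: "p < n" for p
    proof -
      have "u p \<le> norm ev * u p" using ev1 u0[of p] by (simp add: mult_le_cancel_right1)
      also have "\<dots> = cmod ((ev \<cdot>\<^sub>v v) $ p)" using p vc by (simp add: u_def norm_mult)
      also have "\<dots> = cmod ((?BC *\<^sub>v v) $ p)" using Bv by simp
      also have "\<dots> = cmod (\<Sum>r<n. complex_of_real (B $$ (p,r)) * v $ r)"
        using p B vc by (simp add: scalar_prod_def atLeast0LessThan)
      also have "\<dots> \<le> (\<Sum>r<n. \<bar>B $$ (p,r)\<bar> * u r)"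
        by (rule order_trans[OF norm_sum]) (simp add: norm_mult u_def)
      also have "\<dots> \<le> (\<Sum>r<n. (N $$ (p,r) + (if p = j \<and> r = i then \<bar>w\<bar> else 0)) * u r)"
        using Babs p u0 by (intro sum_mono mult_right_mono) auto
      also have "\<dots> = (\<Sum>r<n. N $$ (p,r) * u r) + (\<Sum>r<n. (if r = i then (if p = j then \<bar>w\<bar> * u r else 0) else 0))"
        by (simp only: sum.distrib[symmetric]) (intro sum.cong refl, auto simp: algebra_simps)
      also have "(\<Sum>r<n. (if r = i then (if p = j then \<bar>w\<bar> * u r else 0) else 0)) = (if p = j then \<bar>w\<bar> * u i else 0)"
        using i by (simp add: sum.delta)
      finally show ?thesis .
    qed
    define g where "g r = u r - (\<Sum>s<n. N $$ (r,s) * u s)" for r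
    have gb: "g r \<le> (if r = j then \<bar>w\<bar> * u i else 0)" if "r < n" for r
      using ub[OF that] unfolding g_def by auto
    have ug: "u p = (\<Sum>r<n. X $$ (p,r) * g r)" if p: "p < n" for p
    proof -
      have "(\<Sum>r<n. X $$ (p,r) * g r) = (\<Sum>r<n. X $$ (p,r) * (\<Sum>s<n. ((if r = s then 1 else 0) - N $$ (r,s)) * u s))"
      proof (intro sum.cong refl)
        fix r assume r: "r \<in> {..<n}"
        have "(\<Sum>s<n. ((if r = s then 1 else 0) - N $$ (r,s)) * u s)
            = (\<Sum>s<n. (if s = r then u s else 0)) - (\<Sum>s<n. N $$ (r,s) * u s)"
        proof -
          have "(\<Sum>s<n. ((if r = s then 1 else 0) - N $$ (r,s)) * u s)
            = (\<Sum>s<n. (if s = r then u s else 0) - N $$ (r,s) * u s)"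
            by (intro sum.cong refl) (auto simp: algebra_simps)
          thus ?thesis by (simp only: sum_subtractf)
        qed
        also have "\<dots> = g r" using r by (simp add: sum.delta g_def)
        finally show "X $$ (p,r) * g r = X $$ (p,r) * (\<Sum>s<n. ((if r = s then 1 else 0) - N $$ (r,s)) * u s)" by simp
      qed
      also have "\<dots> = (\<Sum>r<n. \<Sum>s<n. X $$ (p,r) * ((if r = s then 1 else 0) - N $$ (r,s)) * u s)"
        by (simp add: sum_distrib_left mult.assoc)
      also have "\<dots> = (\<Sum>s<n. \<Sum>r<n. X $$ (p,r) * ((if r = s then 1 else 0) - N $$ (r,s)) * u s)"
        by (rule sum.swap)
      also have "\<dots> = (\<Sum>s<n. (\<Sum>r<n. X $$ (p,r) * ((if r = s then 1 else 0) - N $$ (r,s))) * u s)"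
        by (simp add: sum_distrib_right)
      also have "\<dots> = (\<Sum>s<n. (if s = p then u s else 0))"
        using X2 p by (intro sum.cong refl) auto
      also have "\<dots> = u p" using p by (simp add: sum.delta)
      finally show ?thesis by simp
    qed
    have ule: "u p \<le> X $$ (p,j) * (\<bar>w\<bar> * u i)" if p: "p < n" for p
    proof -
      have "u p \<le> (\<Sum>r<n. X $$ (p,r) * (if r = j then \<bar>w\<bar> * u i else 0))"
        unfolding ug[OF p] using gb Xnn p by (intro sum_mono mult_left_mono) auto
      also have "\<dots> = X $$ (p,j) * (\<bar>w\<bar> * u i)"
      proof -
        have "(\<Sum>r<n. X $$ (p,r) * (if r = j then \<bar>w\<bar> * u i else 0)) = (\<Sum>r<n. if r = j then X $$ (p,r) * (\<bar>w\<bar> * u i) else 0)"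
          by (intro sum.cong refl) auto
        thus ?thesis using j by (simp add: sum.delta)
      qed
      finally show ?thesis .
    qed
    have ui: "u i = 0"
    proof (cases "X $$ (i,j) = 0")
      case True
      then show ?thesis using ule[OF i] u0[of i] by auto
    next
      case False
      with Xnn[OF i j] have Xp: "X $$ (i,j) > 0" by auto
      with w False have "\<bar>w\<bar> < 1 / X $$ (i,j)" by auto
      hence "X $$ (i,j) * \<bar>w\<bar> < 1" using Xp by (simp add: field_simps)
      moreover have "u i \<le> (X $$ (i,j) * \<bar>w\<bar>) * u i" using ule[OF i] by (simp add: mult.assoc)
      ultimately show ?thesis using u0[of i]
        by (smt (verit) mult_le_cancel_right1 mult_nonneg_nonneg)
    qed
    have "v = 0\<^sub>v n"
    proof (rule eq_vecI)
      fix p assume "p < dim_vec (0\<^sub>v n :: complex vec)"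
      hence p: "p < n" by auto
      have "u p \<le> 0" using ule[OF p] ui by simp
      hence "u p = 0" using u0[of p] by auto
      thus "v $ p = 0\<^sub>v n $ p" using p unfolding u_def by simp
    qed (insert vc, auto)
    with v0 show False by auto
  qed
qed

end
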